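(* Let $G=(V,E,A)$ be an undirected attributed graph with $A=\{a,b\}$, let $k,\delta$ be integers, and let $R,C\subseteq V$ be disjoint vertex sets. Let $G'$ be the subgraph of $G$ induced by $R\cup C$, properly colored with colors from a totally ordered set (adjacent vertices receive distinct colors), and let every vertex have a distinct integer ID. Define the total order $\prec$ on $R\cup C$ by $u\prec v$ iff $color(u)<color(v)$, or $color(u)=color(v)$ and $ID(u)<ID(v)$, and let $\vec G'$ be the directed acyclic graph obtained from $G'$ by orienting each edge from its $\prec$-smaller endpoint to its $\prec$-larger endpoint. Let $CP(G')$ be a colorful directed path of $\vec G'$ with the maximum number of vertices. Then $ub_{cp}=|CP(G')|$ satisfies $MRFC(R,C)\le ub_{cp}$.
   Context: For $S\subseteq V$, $cnt_S(x)=|\{v\in S:A(v)=x\}|$. A $(k,\delta)$-relative fair clique of $G$ is a clique $K$ of $G$ with $cnt_K(a)\ge k$, $cnt_K(b)\ge k$, $|cnt_K(a)-cnt_K(b)|\le\delta$, such that no clique $K'\supsetneq K$ of $G$ satisfies these three conditions. $MRFC(R,C)$ denotes the maximum number of vertices of a $(k,\delta)$-relative fair clique $K$ of $G$ with $R\subseteq K\subseteq R\cup C$ (the search instance $(R,C)$: $R$ is the current partial clique and $C$ the candidate set). A colorful path is a path $v_1,\dots,v_p$ whose vertices all have pairwise distinct colors; $|CP(G')|$ is its number of vertices. *)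

theory Defs
  imports Main
begin

datatype attr = AttrA | AttrB

definition ugraph :: "'v set \<Rightarrow> ('v \<Rightarrow> 'v \<Rightarrow> bool) \<Rightarrow> bool" where
  "ugraph V E \<longleftrightarrow> finite V \<and> (\<forall>u v. E u v \<longrightarrow> u \<in> V \<and> v \<in> V \<and> u \<noteq> v \<and> E v u)"

definition cnt :: "('v \<Rightarrow> attr) \<Rightarrow> 'v set \<Rightarrow> attr \<Rightarrow> nat" where
  "cnt A S x = card {v \<in> S. A v = x}"

definition is_clique :: "'v set \<Rightarrow> ('v \<Rightarrow> 'v \<Rightarrow> bool) \<Rightarrow> 'v set \<Rightarrow> bool" where
  "is_clique V E K \<longleftrightarrow> K \<subseteq> V \<and> (\<forall>u\<in>K. \<forall>v\<in>K. u \<noteq> v \<longrightarrow> E u v)"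

definition fair_conds :: "('v \<Rightarrow> attr) \<Rightarrow> int \<Rightarrow> int \<Rightarrow> 'v set \<Rightarrow> bool" where
  "fair_conds A k \<delta> K \<longleftrightarrow>
     int (cnt A K AttrA) \<ge> k \<and> int (cnt A K AttrB) \<ge> k \<and>
     \<bar>int (cnt A K AttrA) - int (cnt A K AttrB)\<bar> \<le> \<delta>"

definition rel_fair_clique ::
  "'v set \<Rightarrow> ('v \<Rightarrow> 'v \<Rightarrow> bool) \<Rightarrow> ('v \<Rightarrow> attr) \<Rightarrow> int \<Rightarrow> int \<Rightarrow> 'v set \<Rightarrow> bool" where
  "rel_fair_clique V E A k \<delta> K \<longleftrightarrow>
     is_clique V E K \<and> fair_conds A k \<delta> K \<and>
     \<not> (\<exists>K'. K \<subset> K' \<and> is_clique V E K' \<and> fair_conds A k \<delta> K')"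

text \<open>MRFC(R,C): maximum size of a relative fair clique K with R \<subseteq> K \<subseteq> R \<union> C
  (Sup over nat; 0 if there is none).\<close>
definition MRFC ::
  "'v set \<Rightarrow> ('v \<Rightarrow> 'v \<Rightarrow> bool) \<Rightarrow> ('v \<Rightarrow> attr) \<Rightarrow> int \<Rightarrow> int \<Rightarrow> 'v set \<Rightarrow> 'v set \<Rightarrow> nat" where
  "MRFC V E A k \<delta> R C =
     Sup (card ` {K. rel_fair_clique V E A k \<delta> K \<and> R \<subseteq> K \<and> K \<subseteq> R \<union> C})"

definition prec :: "('v \<Rightarrow> 'c::linorder) \<Rightarrow> ('v \<Rightarrow> int) \<Rightarrow> 'v \<Rightarrow> 'v \<Rightarrow> bool" where
  "prec col ID u v \<longleftrightarrow> col u < col v \<or> (col u = col v \<and> ID u < ID v)"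

definition oarc ::
  "('v \<Rightarrow> 'v \<Rightarrow> bool) \<Rightarrow> 'v set \<Rightarrow> ('v \<Rightarrow> 'c::linorder) \<Rightarrow> ('v \<Rightarrow> int) \<Rightarrow> 'v \<Rightarrow> 'v \<Rightarrow> bool" where
  "oarc E W col ID u v \<longleftrightarrow> u \<in> W \<and> v \<in> W \<and> E u v \<and> prec col ID u v"

definition colorful_dpath ::
  "('v \<Rightarrow> 'v \<Rightarrow> bool) \<Rightarrow> 'v set \<Rightarrow> ('v \<Rightarrow> 'c::linorder) \<Rightarrow> ('v \<Rightarrow> int) \<Rightarrow> 'v list \<Rightarrow> bool" where
  "colorful_dpath E W col ID p \<longleftrightarrow>
     p \<noteq> [] \<and> set p \<subseteq> W \<and> distinct p \<and>
     (\<forall>i. Suc i < length p \<longrightarrow> oarc E W col ID (p ! i) (p ! Suc i)) \<and>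
     distinct (map col p)"

end

theory Submission
  imports Defs
begin

lemma clique_path:
  fixes col :: "'v \<Rightarrow> 'c::linorder"
  assumes "finite K" "K \<noteq> {}" "K \<subseteq> W"
    and cl: "\<forall>u\<in>K. \<forall>v\<in>K. u \<noteq> v \<longrightarrow> E u v"
    and inj: "inj_on col K"
  shows "\<exists>p. colorful_dpath E W col ID p \<and> length p = card K"
proof -
  define s where "s = sorted_list_of_set (col ` K)"
  define p where "p = map (the_inv_into K col) s"
  have fin: "finite (col ` K)" using assms(1) by simp
  have ss: "set s = col ` K" "distinct s" "sorted s" using fin by (auto simp: s_def)
  have mp: "map col p = s" unfolding p_def map_map
    by (rule map_idI) (simp add: f_the_inv_into_f[OF inj] ss(1))
  have setp: "set p = K" unfolding p_def using ss(1) inj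
    by (simp add: image_image the_inv_into_f_f)
  have dp: "distinct p" using mp ss(2) by (metis distinct_map)
  have lenp: "length p = card K" using distinct_card[OF dp] setp by simp
  have "\<forall>i. Suc i < length p \<longrightarrow> oarc E W col ID (p ! i) (p ! Suc i)"
  proof (intro allI impI)
    fix i assume i: "Suc i < length p"
    have lt: "col (p ! i) < col (p ! Suc i)"
    proof -
      have "s ! i < s ! Suc i"
        using ss(2,3) i mp
        by (metis length_map lessI sorted_wrt_nth_less strict_sorted_iff)
      thus ?thesis using mp i by (metis Suc_lessD nth_map)
    qed
    have ne: "p ! i \<noteq> p ! Suc i" using lt by auto
    have in1: "p ! i \<in> K" "p ! Suc i \<in> K" using i setp by (auto intro: nth_mem)
    show "oarc E W col ID (p ! i) (p ! Suc i)"
      unfolding oarc_def prec_def using in1 ne cl lt assms(3) by blast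
  qed
  moreover have "p \<noteq> []" using setp assms(2) by auto
  ultimately have "colorful_dpath E W col ID p"
    unfolding colorful_dpath_def using setp assms(3) dp mp ss(2) by auto
  thus ?thesis using lenp by blast
qed

theorem lemma14:
  fixes V :: "'v set" and E :: "'v \<Rightarrow> 'v \<Rightarrow> bool" and A :: "'v \<Rightarrow> attr"
    and k \<delta> :: int and R C :: "'v set"
    and col :: "'v \<Rightarrow> 'c::linorder" and ID :: "'v \<Rightarrow> int" and P :: "'v list"
  assumes "ugraph V E"
    and "R \<subseteq> V" and "C \<subseteq> V" and "R \<inter> C = {}"
    and "\<forall>u\<in>R \<union> C. \<forall>v\<in>R \<union> C. E u v \<longrightarrow> col u \<noteq> col v"
    and "inj_on ID V"
    and "colorful_dpath E (R \<union> C) col ID P"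
    and "\<forall>Q. colorful_dpath E (R \<union> C) col ID Q \<longrightarrow> length Q \<le> length P"
  shows "MRFC V E A k \<delta> R C \<le> length P"
proof -
  let ?S = "card ` {K. rel_fair_clique V E A k \<delta> K \<and> R \<subseteq> K \<and> K \<subseteq> R \<union> C}"
  have bnd: "x \<le> length P" if xS: "x \<in> ?S" for x
  proof -
    obtain K where K: "rel_fair_clique V E A k \<delta> K" "K \<subseteq> R \<union> C" "x = card K"
      using xS by blast
    have cl: "K \<subseteq> V" "\<forall>u\<in>K. \<forall>v\<in>K. u \<noteq> v \<longrightarrow> E u v"
      using K(1) unfolding rel_fair_clique_def is_clique_def by auto
    have fin: "finite K" using cl(1) assms(1) unfolding ugraph_def by (auto intro: finite_subset)
    show ?thesis
    proof (cases "K = {}")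
      case True thus ?thesis using K by simp
    next
      case False
      have "inj_on col K" unfolding inj_on_def using cl(2) K(2) assms(5) by blast
      then obtain p where "colorful_dpath E (R \<union> C) col ID p" "length p = card K"
        using clique_path[OF fin False K(2) cl(2)] by blast
      thus ?thesis using assms(8) K(3) by metis
    qed
  qed
  show ?thesis unfolding MRFC_def
  proof (cases "?S = {}")
    case True thus "Sup ?S \<le> length P" by (simp only: Sup_nat_empty)
  next
    case False thus "Sup ?S \<le> length P" using bnd by (meson cSup_least)
  qed
qed

end
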